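(* Consider the wireless network described in the context, with nodes sending independent codewords under decode-and-forward (DF). Suppose the nearest neighbor algorithm (NNA) terminates normally, producing a route $\mathcal{M}^{\mathrm{NNA}}$ from the source (node $1$) to the destination (node $D$). Then $\mathcal{M}^{\mathrm{NNA}}$ is optimal for DF: $$R_{\mathrm{DF}}(\mathcal{M}^{\mathrm{NNA}}) = R_{\mathrm{DF}}^{\max} = \max_{\mathcal{M}} R_{\mathrm{DF}}(\mathcal{M}),$$ where the maximum is over all routes $\mathcal{M}$ from node $1$ to node $D$.
   Context: Network: a finite set of nodes $\mathcal{S}=\{1,2,\dots,D\}$, $D\ge 2$. Node $1$ is the source and node $D$ is the destination. Received powers: for distinct nodes $i,t$, the power received at $t$ from $i$ is a positive real number $P_{it}$. In the paper $P_{it}=\kappa d_{it}^{-\eta}P_i$, where $P_i>0$ is the transmit power, $d_{it}$ the distance, $\eta\ge 2$ and $\kappa>0$. All receivers have the same noise power $N>0$. Routes: a route is an ordered tuple of distinct nodes $\mathcal{M}=(m_1,\dots,m_L)$ with $m_1=1$ and $L\ge1$. It is a route from the source to the destination if moreover $m_L=D$. For a route $\mathcal{M}$ and a node $a\notin\mathcal{M}$, $\mathcal{M}\cup\{a\}$ denotes the route $(m_1,\dots,m_L,a)$; appending an ordered tuple of nodes is defined the same way. DF with independent codewords: the reception rate of node $m_t$ ($2\le t\le L$) in route $\mathcal{M}$ is $$R_{m_t}(\mathcal{M})=\tfrac12\log\Big(1+N^{-1}\sum_{i=1}^{t-1}P_{m_i m_t}\Big).$$ The DF rate supported by $\mathcal{M}$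 (for $L\ge2$) is $R_{\mathrm{DF}}(\mathcal{M})=\min_{2\le t\le L}R_{m_t}(\mathcal{M})$. Also $R_{\mathrm{DF}}^{\max}=\max R_{\mathrm{DF}}(\mathcal{M})$ over all routes from $1$ to $D$. A route from $1$ to $D$ is optimal for DF if it attains $R_{\mathrm{DF}}^{\max}$. Nearest neighbor: node $i\notin\mathcal{M}$ is a nearest neighbor with respect to route $\mathcal{M}$ iff $P_{mi}\ge P_{mj}$ for all $m\in\mathcal{M}$ and all $j\in\mathcal{S}\setminus(\mathcal{M}\cup\{i\})$. NNA: 1. Start with $\mathcal{M}=(1)$. 2. If there is a unique nearest neighbor $i^*$ with respect to the current $\mathcal{M}$, set $\mathcal{M}\leftarrow\mathcal{M}\cup\{i^*\}$; otherwise the algorithm terminates prematurely. 3. Repeat step 2 until node $D$ has been appended, in which case the algorithm terminates normally and outputs $\mathcal{M}$. *)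

theory Defs
  imports Complex_Main
begin

text \<open>Nodes are 1..D; P i t is the power received at t from i; N the noise power.
Routes are lists of distinct nodes starting with node 1.\<close>

definition nodes :: "nat \<Rightarrow> nat set" where
  "nodes D = {1..D}"

definition is_route :: "nat \<Rightarrow> nat list \<Rightarrow> bool" where
  "is_route D M \<longleftrightarrow> M \<noteq> [] \<and> distinct M \<and> set M \<subseteq> nodes D \<and> hd M = 1"

definition is_route_to_dest :: "nat \<Rightarrow> nat list \<Rightarrow> bool" where
  "is_route_to_dest D M \<longleftrightarrow> is_route D M \<and> last M = D"

text \<open>Reception rate of the node at (0-based) position t of route M, i.e. m_{t+1}:
 1/2 log(1 + N^{-1} * sum of powers received from all earlier nodes).\<close>
definition rec_rate :: "(nat \<Rightarrow> nat \<Rightarrow> real) \<Rightarrow> real \<Rightarrow> nat list \<Rightarrow> nat \<Rightarrow> real" where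
  "rec_rate P N M t = (1/2) * log 2 (1 + (\<Sum>i<t. P (M ! i) (M ! t)) / N)"

text \<open>DF rate of a route with at least two nodes: minimum over positions 2..L (1-based).\<close>
definition R_DF :: "(nat \<Rightarrow> nat \<Rightarrow> real) \<Rightarrow> real \<Rightarrow> nat list \<Rightarrow> real" where
  "R_DF P N M = Min ((\<lambda>t. rec_rate P N M t) ` {1..<length M})"

definition R_DF_max :: "nat \<Rightarrow> (nat \<Rightarrow> nat \<Rightarrow> real) \<Rightarrow> real \<Rightarrow> real" where
  "R_DF_max D P N = Max (R_DF P N ` {M. is_route_to_dest D M})"

definition nearest_neighbor :: "nat \<Rightarrow> (nat \<Rightarrow> nat \<Rightarrow> real) \<Rightarrow> nat list \<Rightarrow> nat \<Rightarrow> bool" where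
  "nearest_neighbor D P M i \<longleftrightarrow> i \<in> nodes D \<and> i \<notin> set M \<and>
     (\<forall>m\<in>set M. \<forall>j\<in>nodes D - (set M \<union> {i}). P m i \<ge> P m j)"

inductive nna_reach :: "nat \<Rightarrow> (nat \<Rightarrow> nat \<Rightarrow> real) \<Rightarrow> nat list \<Rightarrow> bool"
  for D P where
  start: "nna_reach D P [1]"
| step: "\<lbrakk> nna_reach D P M; D \<notin> set M; nearest_neighbor D P M i;
          \<forall>j. nearest_neighbor D P M j \<longrightarrow> j = i \<rbrakk> \<Longrightarrow> nna_reach D P (M @ [i])"

definition nna_output :: "nat \<Rightarrow> (nat \<Rightarrow> nat \<Rightarrow> real) \<Rightarrow> nat list \<Rightarrow> bool" where
  "nna_output D P M \<longleftrightarrow> nna_reach D P M \<and> D \<in> set M"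

end

theory Submission
  imports Defs
begin

lemma sum_nth_set:
  assumes "distinct xs" "s \<le> length xs"
  shows "(\<Sum>i<s. f (xs ! i)) = sum f (set (take s xs))"
proof -
  have inj: "inj_on ((!) xs) {0..<s}" using assms
    by (auto simp: inj_on_def nth_eq_iff_index_eq)
  have "set (take s xs) = (!) xs ` {0..<s}" using nth_image[OF assms(2)] by simp
  then have "sum f (set (take s xs)) = sum (f \<circ> (!) xs) {0..<s}"
    using sum.reindex[OF inj] by simp
  then show ?thesis by (simp add: lessThan_atLeast0)
qed

lemma nna_inv:
  assumes "nna_reach D P M" "D \<ge> 1"
  shows "M \<noteq> [] \<and> hd M = 1 \<and> distinct M \<and> set M \<subseteq> nodes D \<and> D \<notin> set (butlast M) \<and>
    (\<forall>t. 1 \<le> t \<and> t < length M \<longrightarrow> nearest_neighbor D P (take t M) (M!t))"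
  using assms(1)
proof (induction rule: nna_reach.induct)
  case start
  then show ?case using assms(2) by (auto simp: nodes_def)
next
  case (step M i)
  note IH = step.IH
  note nn = step.hyps(3)
  have DM: "D \<notin> set M" by (rule step.hyps(2))
  have Mne: "M \<noteq> []" using IH by blast
  have A: "hd (M @ [i]) = 1" using IH Mne by simp
  have B: "distinct (M @ [i])" using IH nn unfolding nearest_neighbor_def by simp
  have C: "set (M @ [i]) \<subseteq> nodes D" using IH nn unfolding nearest_neighbor_def by simp
  have D': "D \<notin> set (butlast (M @ [i]))" using DM by simp
  have E: "\<forall>t. 1 \<le> t \<and> t < length (M@[i]) \<longrightarrow> nearest_neighbor D P (take t (M@[i])) ((M@[i])!t)"
  proof (intro allI impI)
    fix t assume t: "1 \<le> t \<and> t < length (M@[i])"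
    show "nearest_neighbor D P (take t (M@[i])) ((M@[i])!t)"
    proof (cases "t < length M")
      case True
      then have "take t (M@[i]) = take t M" "(M@[i])!t = M!t" by (simp_all add: nth_append)
      then show ?thesis using IH t True by simp
    next
      case False
      then have "t = length M" using t by simp
      then show ?thesis using nn by simp
    qed
  qed
  have Mi: "M @ [i] \<noteq> []" by simp
  from Mi A B C D' E show ?case by blast
qed

theorem theorem1:
  fixes D :: nat and P :: "nat \<Rightarrow> nat \<Rightarrow> real" and N :: real and M :: "nat list"
  assumes "D \<ge> 2"
    and "N > 0"
    and "\<And>i t. i \<in> nodes D \<Longrightarrow> t \<in> nodes D \<Longrightarrow> i \<noteq> t \<Longrightarrow> P i t > 0"
    and "nna_output D P M"
  shows "is_route_to_dest D M \<and> R_DF P N M = R_DF_max D P N"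
proof -
  have reach: "nna_reach D P M" and DM: "D \<in> set M" using assms(4) by (auto simp: nna_output_def)
  note inv = nna_inv[OF reach] 
  have inv: "M \<noteq> [] \<and> hd M = 1 \<and> distinct M \<and> set M \<subseteq> nodes D \<and> D \<notin> set (butlast M) \<and>
    (\<forall>t. 1 \<le> t \<and> t < length M \<longrightarrow> nearest_neighbor D P (take t M) (M!t))"
    using inv assms(1) by simp
  have lastM: "last M = D"
  proof -
    have "M = butlast M @ [last M]" using inv by simp
    then have "set M = set (butlast M) \<union> {last M}" by (metis set_append empty_set list.simps(15) Un_empty_right)
    then show ?thesis using inv DM by auto
  qed
  have routeM: "is_route_to_dest D M" using inv lastM by (simp add: is_route_to_dest_def is_route_def)
  have M0: "M ! 0 = 1" using inv by (metis hd_conv_nth)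
  have lenM: "length M \<ge> 2"
  proof (rule ccontr)
    assume "\<not> ?thesis"
    then have "length M = 1" using inv by (cases "length M") auto
    then have "last M = M ! 0" using inv last_conv_nth[of M] by simp
    then show False using lastM M0 assms(1) by simp
  qed
  have fin1: "finite ((\<lambda>t. rec_rate P N M t) ` {1..<length M})" by simp
  have ne1: "(\<lambda>t. rec_rate P N M t) ` {1..<length M} \<noteq> {}" using lenM by auto
  obtain t where t: "t \<in> {1..<length M}" and Rt: "R_DF P N M = rec_rate P N M t"
    using Min_in[OF fin1 ne1] unfolding R_DF_def by auto
  let ?S = "set (take t M)"
  have nnt: "nearest_neighbor D P (take t M) (M!t)" using inv t by auto
  have DnS: "D \<notin> ?S"
  proof
    assume "D \<in> ?S"
    moreover have "take t M = take t (butlast M)" using t by (simp add: take_butlast)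
    moreover have "set (take t (butlast M)) \<subseteq> set (butlast M)" by (rule set_take_subset)
    ultimately show False using inv by auto
  qed
  have oneS: "1 \<in> ?S" using t M0 inv
  proof -
    have "0 < length (take t M)" using t by simp
    then have "take t M ! 0 \<in> ?S" by (rule nth_mem)
    then show ?thesis using t M0 by simp
  qed
  have key: "R_DF P N M' \<le> R_DF P N M" if r: "is_route_to_dest D M'" for M'
  proof -
    have r1: "M' \<noteq> []" "distinct M'" "set M' \<subseteq> nodes D" "hd M' = 1" "last M' = D"
      using r by (auto simp: is_route_to_dest_def is_route_def)
    have M'0: "M' ! 0 = 1" using r1 by (metis hd_conv_nth)
    have ex: "\<exists>s. s < length M' \<and> M' ! s \<notin> ?S"
    proof -
      have "last M' = M' ! (length M' - 1)" using r1 by (simp add: last_conv_nth)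
      then show ?thesis using r1 DnS by (intro exI[of _ "length M' - 1"]) auto
    qed
    define s where "s = (LEAST s. s < length M' \<and> M' ! s \<notin> ?S)"
    have s1: "s < length M'" "M' ! s \<notin> ?S" using LeastI_ex[OF ex] unfolding s_def by auto
    have s2: "\<And>i. i < s \<Longrightarrow> M' ! i \<in> ?S"
    proof -
      fix i assume "i < s"
      then have "\<not> (i < length M' \<and> M' ! i \<notin> ?S)" unfolding s_def by (rule not_less_Least)
      then show "M' ! i \<in> ?S" using \<open>i < s\<close> s1 by auto
    qed
    have s0: "s \<ge> 1" proof (rule ccontr) assume "\<not> 1 \<le> s" then have "s = 0" by simp
      then show False using s1 M'0 oneS by simp qed
    have lenM': "length M' \<ge> 2" using s0 s1 by simp
    have sub: "set (take s M') \<subseteq> ?S"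
      using s2 s1 by (auto simp: in_set_conv_nth)
    define x where "x = M' ! s"
    have xD: "x \<in> nodes D" using s1 r1 x_def by auto
    have SD: "?S \<subseteq> nodes D" using inv by (meson order_trans set_take_subset)
    have mtD: "M ! t \<in> nodes D" using inv t by auto
    have "(\<Sum>i<s. P (M' ! i) (M' ! s)) = sum (\<lambda>y. P y x) (set (take s M'))"
      using sum_nth_set[OF r1(2), of s "\<lambda>y. P y x"] s1 x_def by simp
    also have "\<dots> \<le> sum (\<lambda>y. P y x) ?S"
    proof (rule sum_mono2)
      show "finite ?S" by simp
      show "set (take s M') \<subseteq> ?S" by (rule sub)
      fix b assume b: "b \<in> ?S - set (take s M')"
      then have "b \<in> nodes D" "b \<noteq> x" using SD s1 x_def by auto
      then show "0 \<le> P b x" using assms(3)[of b x] xD by simp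
    qed
    also have "\<dots> \<le> sum (\<lambda>y. P y (M ! t)) ?S"
    proof (rule sum_mono)
      fix y assume y: "y \<in> ?S"
      show "P y x \<le> P y (M ! t)"
      proof (cases "x = M ! t")
        case False
        then have "x \<in> nodes D - (?S \<union> {M ! t})" using xD s1 x_def by auto
        then show ?thesis using nnt y unfolding nearest_neighbor_def by blast
      qed simp
    qed
    also have "\<dots> = (\<Sum>i<t. P (M ! i) (M ! t))"
      using sum_nth_set[of M t "\<lambda>y. P y (M ! t)"] inv t by simp
    finally have le: "(\<Sum>i<s. P (M' ! i) (M' ! s)) \<le> (\<Sum>i<t. P (M ! i) (M ! t))" .
    have pos: "0 \<le> (\<Sum>i<s. P (M' ! i) (M' ! s))"
    proof (rule sum_nonneg)
      fix i assume "i \<in> {..<s}"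
      then have "i < s" by simp
      moreover then have "M' ! i \<noteq> M' ! s" using r1 s1 by (simp add: nth_eq_iff_index_eq)
      ultimately show "0 \<le> P (M' ! i) (M' ! s)"
        using assms(3) r1 s1 by (meson less_imp_le less_trans nth_mem subsetD)
    qed
    have "rec_rate P N M' s \<le> rec_rate P N M t"
      unfolding rec_rate_def using le pos assms(2)
      by (simp add: divide_right_mono add_pos_nonneg)
    moreover have "R_DF P N M' \<le> rec_rate P N M' s"
      unfolding R_DF_def using s0 s1 by (intro Min_le) auto
    ultimately show ?thesis using Rt by simp
  qed
  have finR: "finite {M. is_route_to_dest D M}"
  proof (rule finite_subset)
    show "{M. is_route_to_dest D M} \<subseteq> {xs. set xs \<subseteq> nodes D \<and> length xs \<le> card (nodes D)}"
    proof
      fix xs assume "xs \<in> {M. is_route_to_dest D M}"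
      then have "distinct xs" "set xs \<subseteq> nodes D" by (auto simp: is_route_to_dest_def is_route_def)
      moreover have "finite (nodes D)" by (simp add: nodes_def)
      ultimately have "card (set xs) \<le> card (nodes D)" "card (set xs) = length xs"
        using card_mono distinct_card by blast+
      then show "xs \<in> {xs. set xs \<subseteq> nodes D \<and> length xs \<le> card (nodes D)}"
        using \<open>set xs \<subseteq> nodes D\<close> by simp
    qed
    show "finite {xs. set xs \<subseteq> nodes D \<and> length xs \<le> card (nodes D)}"
      using finite_lists_length_le[of "nodes D" "card (nodes D)"] by (simp add: nodes_def)
  qed
  have "R_DF_max D P N = R_DF P N M"
    unfolding R_DF_max_def
  proof (rule Max_eqI)
    show "finite (R_DF P N ` {M. is_route_to_dest D M})" using finR by (rule finite_imageI)
    fix y assume "y \<in> R_DF P N ` {M. is_route_to_dest D M}"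
    then obtain M' where "is_route_to_dest D M'" "y = R_DF P N M'" by blast
    then show "y \<le> R_DF P N M" using key by simp
  next
    show "R_DF P N M \<in> R_DF P N ` {M. is_route_to_dest D M}" using routeM by (intro imageI) simp
  qed
  then show ?thesis using routeM by simp
qed

end
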